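(* Let $1\le r\le s\le t$ and let $u=ABCd$, $v=A'B'C'd'$ be distinct vertices of $E3C(r,s,t)$ with $A=A'$, $C=C'$ and $d=d'$ (any $d\in\{0,1,2\}$). Then there exist $2r+2$ pairwise internally disjoint $u$–$v$ paths in $E3C(r,s,t)$, each of length at most $s+6$.
   Context: The exchanged 3-ary $n$-cube $E3C(r,s,t)$ ($r,s,t\ge1$, $n=r+s+t+1$): vertices are strings written $x=ABCd$ with $A\in\{0,1,2\}^r$, $B\in\{0,1,2\}^s$, $C\in\{0,1,2\}^t$, $d\in\{0,1,2\}$. Two distinct vertices $x=ABCd$, $y=A'B'C'd'$ are adjacent iff one of: (E0) $A=A',B=B',C=C'$ and $d\ne d'$; (E1) $d=d'=0$, $A=A'$, $B=B'$ and $C,C'$ differ in exactly one position; (E2) $d=d'=1$, $A=A'$, $C=C'$ and $B,B'$ differ in exactly one position; (E3) $d=d'=2$, $B=B'$, $C=C'$ and $A,A'$ differ in exactly one position. Paths are internally disjoint if they share no vertices other than their endpoints; length = number of edges. *)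

theory Defs
  imports Main
begin

type_synonym e3vertex = "nat list \<times> nat list \<times> nat list \<times> nat"

definition ternary :: "nat \<Rightarrow> nat list \<Rightarrow> bool" where
  "ternary k X \<longleftrightarrow> length X = k \<and> (\<forall>x\<in>set X. x < 3)"

definition e3c_verts :: "nat \<Rightarrow> nat \<Rightarrow> nat \<Rightarrow> e3vertex set" where
  "e3c_verts r s t = {(A,B,C,d). ternary r A \<and> ternary s B \<and> ternary t C \<and> d < 3}"

definition differ_one :: "nat list \<Rightarrow> nat list \<Rightarrow> bool" where
  "differ_one X Y \<longleftrightarrow> length X = length Y \<and> card {i. i < length X \<and> X ! i \<noteq> Y ! i} = 1"

definition e3c_adj :: "nat \<Rightarrow> nat \<Rightarrow> nat \<Rightarrow> e3vertex \<Rightarrow> e3vertex \<Rightarrow> bool" where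
  "e3c_adj r s t x y \<longleftrightarrow> x \<in> e3c_verts r s t \<and> y \<in> e3c_verts r s t \<and> x \<noteq> y \<and>
     (case x of (A,B,C,d) \<Rightarrow> case y of (A',B',C',d') \<Rightarrow>
        (A = A' \<and> B = B' \<and> C = C' \<and> d \<noteq> d')
      \<or> (d = 0 \<and> d' = 0 \<and> A = A' \<and> B = B' \<and> differ_one C C')
      \<or> (d = 1 \<and> d' = 1 \<and> A = A' \<and> C = C' \<and> differ_one B B')
      \<or> (d = 2 \<and> d' = 2 \<and> B = B' \<and> C = C' \<and> differ_one A A'))"

text \<open>A path from u to v: a list of distinct vertices, consecutive ones adjacent.
  Its length is the number of edges, i.e. length p - 1.\<close>
definition e3c_path :: "nat \<Rightarrow> nat \<Rightarrow> nat \<Rightarrow> e3vertex \<Rightarrow> e3vertex \<Rightarrow> e3vertex list \<Rightarrow> bool" where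
  "e3c_path r s t u v p \<longleftrightarrow> p \<noteq> [] \<and> hd p = u \<and> last p = v \<and> distinct p \<and>
     set p \<subseteq> e3c_verts r s t \<and>
     (\<forall>i. Suc i < length p \<longrightarrow> e3c_adj r s t (p ! i) (p ! Suc i))"

end

theory Submission
  imports Defs
begin


definition upd :: "nat list \<Rightarrow> nat list \<Rightarrow> nat set \<Rightarrow> nat list" where
  "upd X Y S = map (\<lambda>j. if j \<in> S then Y!j else X!j) [0..<length X]"

lemma upd_length[simp]: "length (upd X Y S) = length X"
  by (simp add: upd_def)

lemma upd_nth[simp]: "j < length X \<Longrightarrow> upd X Y S ! j = (if j \<in> S then Y!j else X!j)"
  by (simp add: upd_def)

lemma upd_empty[simp]: "upd X Y {} = X"
  by (rule nth_equalityI) auto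

lemma upd_full:
  assumes "length Y = length X" "\<forall>j<length X. X!j \<noteq> Y!j \<longrightarrow> j \<in> S"
  shows "upd X Y S = Y"
  by (rule nth_equalityI) (use assms in auto)

lemma upd_ternary:
  assumes "ternary k X" "ternary k Y" shows "ternary k (upd X Y S)"
  using assms unfolding ternary_def by (auto simp: upd_def)

lemma upd_inj:
  assumes "length Y = length X" "S \<subseteq> {j. j<length X \<and> X!j \<noteq> Y!j}" "T \<subseteq> {j. j<length X \<and> X!j \<noteq> Y!j}"
    "upd X Y S = upd X Y T"
  shows "S = T"
proof (rule ccontr)
  assume "S \<noteq> T"
  then obtain j where j: "j \<in> S \<and> j \<notin> T \<or> j \<in> T \<and> j \<notin> S" by blast
  then have jl: "j < length X" "X!j \<noteq> Y!j" using assms(2,3) by auto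
  have "upd X Y S ! j = upd X Y T ! j" using assms(4) by simp
  then show False using j jl by (auto split: if_splits)
qed

lemma differ_one_sym: "differ_one X Y \<Longrightarrow> differ_one Y X"
  unfolding differ_one_def by (simp add: eq_commute)

lemma differ_one_I:
  assumes "length X = length Y" "j < length X" "X!j \<noteq> Y!j" "\<forall>i<length X. i \<noteq> j \<longrightarrow> X!i = Y!i"
  shows "differ_one X Y"
proof -
  have "{i. i < length X \<and> X ! i \<noteq> Y ! i} = {j}" using assms by auto
  then show ?thesis using assms(1) unfolding differ_one_def by simp
qed

lemma differ_one_upd_list:
  assumes "j < length X" "c \<noteq> X!j" shows "differ_one X (X[j:=c])"
  by (rule differ_one_I[where j=j]) (use assms in auto)

lemma upd_differ_one:
  assumes "length Y = length X" "j < length X" "X!j \<noteq> Y!j" "j \<notin> S"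
  shows "differ_one (upd X Y S) (upd X Y (insert j S))"
  by (rule differ_one_I[where j=j]) (use assms in auto)

lemma ternary_update: "ternary k X \<Longrightarrow> c < 3 \<Longrightarrow> ternary k (X[j:=c])"
  unfolding ternary_def by (auto dest: set_update_subset_insert[THEN subsetD])

definition walk :: "nat list \<Rightarrow> nat list \<Rightarrow> nat list \<Rightarrow> nat list list" where
  "walk X Y L = map (\<lambda>m. upd X Y (set (take m L))) [0..<Suc (length L)]"

definition bchain :: "nat list list \<Rightarrow> bool" where
  "bchain ws \<longleftrightarrow> (\<forall>i. Suc i < length ws \<longrightarrow> differ_one (ws!i) (ws!Suc i))"

locale wsetup =
  fixes k :: nat and X Y :: "nat list" and L :: "nat list"
  assumes tX: "ternary k X" and tY: "ternary k Y" and dL: "distinct L"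
    and sL: "set L = {j. j<k \<and> X!j \<noteq> Y!j}"
begin

lemma lens: "length X = k" "length Y = k" using tX tY unfolding ternary_def by auto

lemma walk_length: "length (walk X Y L) = Suc (length L)" by (simp add: walk_def)

lemma lenL: "length L \<le> k"
proof -
  have "length L = card (set L)" using dL by (simp add: distinct_card)
  also have "\<dots> \<le> card {..<k}" by (rule card_mono) (auto simp: sL)
  finally show ?thesis by simp
qed

lemma walk_nth: "m \<le> length L \<Longrightarrow> walk X Y L ! m = upd X Y (set (take m L))"
  unfolding walk_def by (simp del: upt_Suc)

lemma walk_ne: "walk X Y L \<noteq> []" by (simp add: walk_def)

lemma walk_hd: "hd (walk X Y L) = X"
  using walk_nth[of 0] walk_ne by (simp add: hd_conv_nth walk_length)

lemma walk_last: "last (walk X Y L) = Y"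
proof -
  have "last (walk X Y L) = walk X Y L ! length L"
    using walk_ne by (simp add: last_conv_nth walk_length)
  also have "\<dots> = Y" using walk_nth[of "length L"] upd_full[of Y X "set L"] lens sL by auto
  finally show ?thesis .
qed

lemma walk_set: "w \<in> set (walk X Y L) \<longleftrightarrow> (\<exists>m\<le>length L. w = upd X Y (set (take m L)))"
  unfolding walk_def by (auto simp del: upt_Suc) (metis atLeastLessThan_iff less_Suc_eq_le)+

lemma walk_elem:
  assumes "w \<in> set (walk X Y L)"
  shows "ternary k w" "\<forall>j<k. w!j = X!j \<or> w!j = Y!j"
  using assms upd_ternary[OF tX tY] lens by (auto simp: walk_set)

lemma take_sub: "set (take m L) \<subseteq> {j. j<length X \<and> X!j \<noteq> Y!j}"
  using set_take_subset[of m L] sL lens by auto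

lemma walk_distinct: "distinct (walk X Y L)"
proof -
  have "set (take m L) \<noteq> set (take m' L)" if "m < m'" "m' \<le> length L" for m m'
  proof -
    have "L ! m \<in> set (take m' L)" using that by (auto simp: in_set_conv_nth)
    moreover have "L ! m \<notin> set (take m L)" using that dL
      by (auto simp: in_set_conv_nth nth_eq_iff_index_eq)
    ultimately show ?thesis by blast
  qed
  then have "upd X Y (set (take m L)) \<noteq> upd X Y (set (take m' L))" if "m < m'" "m' \<le> length L" for m m'
    using upd_inj[OF _ take_sub take_sub] lens that by fastforce
  then show ?thesis unfolding walk_def distinct_conv_nth
    by (auto simp del: upt_Suc) (metis linorder_neqE_nat less_Suc_eq_le)
qed

lemma walk_chain: "bchain (walk X Y L)"
  unfolding bchain_def
proof (intro allI impI)
  fix i assume i: "Suc i < length (walk X Y L)"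
  then have il: "i < length L" by (simp add: walk_length)
  have e: "set (take (Suc i) L) = insert (L!i) (set (take i L))"
    using il by (simp add: take_Suc_conv_app_nth)
  have "L!i \<in> set L" using il by simp
  then have "L!i < length X" "X!(L!i) \<noteq> Y!(L!i)" using sL lens by auto
  moreover have "L!i \<notin> set (take i L)" using dL il
    by (auto simp: in_set_conv_nth nth_eq_iff_index_eq)
  ultimately show "differ_one (walk X Y L ! i) (walk X Y L ! Suc i)"
    using il walk_nth[of i] walk_nth[of "Suc i"] e upd_differ_one lens by simp
qed

end



definition ewalk :: "nat \<Rightarrow> nat \<Rightarrow> nat \<Rightarrow> e3vertex list \<Rightarrow> bool" where
  "ewalk r s t p \<longleftrightarrow> p \<noteq> [] \<and> set p \<subseteq> e3c_verts r s t \<and>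
     (\<forall>i. Suc i < length p \<longrightarrow> e3c_adj r s t (p ! i) (p ! Suc i))"

lemma ewalk_single[simp]: "ewalk r s t [x] \<longleftrightarrow> x \<in> e3c_verts r s t"
  by (simp add: ewalk_def)

lemma ewalk_append:
  assumes "p \<noteq> []" "q \<noteq> []"
  shows "ewalk r s t (p @ q) \<longleftrightarrow> ewalk r s t p \<and> ewalk r s t q \<and> e3c_adj r s t (last p) (hd q)"
proof
  assume a: "ewalk r s t (p @ q)"
  have "e3c_adj r s t (p!i) (p!Suc i)" if "Suc i < length p" for i
    using a that unfolding ewalk_def by (auto simp: nth_append dest!: spec[of _ i])
  moreover have "e3c_adj r s t (q!i) (q!Suc i)" if "Suc i < length q" for i
    using a that unfolding ewalk_def by (auto simp: nth_append dest!: spec[of _ "length p + i"])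
  moreover have "e3c_adj r s t (last p) (hd q)"
    using a assms unfolding ewalk_def
    by (auto simp: nth_append last_conv_nth hd_conv_nth dest!: spec[of _ "length p - 1"])
  ultimately show "ewalk r s t p \<and> ewalk r s t q \<and> e3c_adj r s t (last p) (hd q)"
    using a assms unfolding ewalk_def by auto
next
  assume a: "ewalk r s t p \<and> ewalk r s t q \<and> e3c_adj r s t (last p) (hd q)"
  show "ewalk r s t (p @ q)"
    unfolding ewalk_def
  proof (intro conjI allI impI)
    show "p @ q \<noteq> []" using assms by simp
    show "set (p @ q) \<subseteq> e3c_verts r s t" using a unfolding ewalk_def by auto
    fix i assume i: "Suc i < length (p @ q)"
    consider "Suc i < length p" | "Suc i = length p" | "i \<ge> length p" by linarith
    then show "e3c_adj r s t ((p @ q) ! i) ((p @ q) ! Suc i)"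
    proof cases
      case 1 then show ?thesis using a unfolding ewalk_def by (simp add: nth_append)
    next
      case 2
      then have "i = length p - 1" by simp
      then show ?thesis using a assms 2
        by (simp add: nth_append last_conv_nth hd_conv_nth)
    next
      case 3
      then have "Suc (i - length p) < length q" using i by simp
      then show ?thesis using a 3 unfolding ewalk_def
        by (simp add: nth_append Suc_diff_le)
    qed
  qed
qed

lemma ewalk_Cons:
  assumes "p \<noteq> []"
  shows "ewalk r s t (x # p) \<longleftrightarrow> x \<in> e3c_verts r s t \<and> e3c_adj r s t x (hd p) \<and> ewalk r s t p"
  using ewalk_append[of "[x]" p r s t] assms by auto

lemma e3c_path_iff:
  "e3c_path r s t u v p \<longleftrightarrow> ewalk r s t p \<and> hd p = u \<and> last p = v \<and> distinct p"
  unfolding e3c_path_def ewalk_def by auto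

lemma verts_iff[simp]: "(a,b,c,d) \<in> e3c_verts r s t \<longleftrightarrow> ternary r a \<and> ternary s b \<and> ternary t c \<and> d < 3"
  by (simp add: e3c_verts_def)

lemma adj_iff: "e3c_adj r s t (a,b,c,d) (a',b',c',d') \<longleftrightarrow>
   (a,b,c,d) \<in> e3c_verts r s t \<and> (a',b',c',d') \<in> e3c_verts r s t \<and> (a,b,c,d) \<noteq> (a',b',c',d') \<and>
        ((a = a' \<and> b = b' \<and> c = c' \<and> d \<noteq> d')
      \<or> (d = 0 \<and> d' = 0 \<and> a = a' \<and> b = b' \<and> differ_one c c')
      \<or> (d = 1 \<and> d' = 1 \<and> a = a' \<and> c = c' \<and> differ_one b b')
      \<or> (d = 2 \<and> d' = 2 \<and> b = b' \<and> c = c' \<and> differ_one a a'))"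
  by (simp add: e3c_adj_def)

lemma differ_one_neq: "differ_one X Y \<Longrightarrow> X \<noteq> Y"
  unfolding differ_one_def by auto

lemma lift_ewalk:
  assumes "ws \<noteq> []" "bchain ws" "\<forall>w\<in>set ws. ternary s w" "ternary r a" "ternary t c"
  shows "ewalk r s t (map (\<lambda>b. (a,b,c,1)) ws)"
  using assms unfolding ewalk_def bchain_def
  by (auto simp: adj_iff dest: differ_one_neq)

lemma bchain_Cons: assumes "ws \<noteq> []" shows "bchain (x # ws) \<longleftrightarrow> differ_one x (hd ws) \<and> bchain ws"
proof
  assume a: "bchain (x # ws)"
  have l: "Suc 0 < length (x#ws)" using assms by simp
  have "differ_one ((x#ws)!0) ((x#ws)!Suc 0)" using a[unfolded bchain_def, rule_format, OF l] .
  then have "differ_one x (hd ws)" using assms by (simp add: hd_conv_nth)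
  moreover have "bchain ws" unfolding bchain_def
  proof (intro allI impI)
    fix i assume "Suc i < length ws"
    then have l: "Suc (Suc i) < length (x#ws)" by simp
    have "differ_one ((x#ws)!Suc i) ((x#ws)!Suc (Suc i))" using a[unfolded bchain_def, rule_format, OF l] .
    then show "differ_one (ws ! i) (ws ! Suc i)" by simp
  qed
  ultimately show "differ_one x (hd ws) \<and> bchain ws" by simp
next
  assume a: "differ_one x (hd ws) \<and> bchain ws"
  show "bchain (x # ws)" unfolding bchain_def
  proof (intro allI impI)
    fix i assume i: "Suc i < length (x # ws)"
    show "differ_one ((x # ws) ! i) ((x # ws) ! Suc i)"
    proof (cases i)
      case 0 then show ?thesis using a assms by (simp add: hd_conv_nth)
    next
      case (Suc j) then show ?thesis using a i unfolding bchain_def by simp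
    qed
  qed
qed

lemma bchain_snoc: assumes "ws \<noteq> []" shows "bchain (ws @ [x]) \<longleftrightarrow> differ_one (last ws) x \<and> bchain ws"
proof
  assume a: "bchain (ws @ [x])"
  have l: "Suc (length ws - 1) < length (ws @ [x])" using assms by simp
  have "differ_one ((ws @ [x])!(length ws - 1)) ((ws @ [x])!Suc (length ws - 1))"
    using a[unfolded bchain_def, rule_format, OF l] .
  then have "differ_one (last ws) x" using assms by (simp add: last_conv_nth nth_append)
  moreover have "bchain ws" unfolding bchain_def
  proof (intro allI impI)
    fix i assume i: "Suc i < length ws"
    then have "differ_one ((ws @ [x])!i) ((ws @ [x])!Suc i)" using a unfolding bchain_def by simp
    then show "differ_one (ws ! i) (ws ! Suc i)" using i by (simp add: nth_append)
  qed
  ultimately show "differ_one (last ws) x \<and> bchain ws" by simp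
next
  assume a: "differ_one (last ws) x \<and> bchain ws"
  show "bchain (ws @ [x])" unfolding bchain_def
  proof (intro allI impI)
    fix i assume i: "Suc i < length (ws @ [x])"
    show "differ_one ((ws @ [x]) ! i) ((ws @ [x]) ! Suc i)"
    proof (cases "Suc i = length ws")
      case True
      then have "i = length ws - 1" by simp
      then show ?thesis using a assms True by (simp add: nth_append last_conv_nth)
    next
      case False then show ?thesis using a i unfolding bchain_def by (simp add: nth_append)
    qed
  qed
qed



lemma family:
  fixes ps :: "e3vertex list list"
  assumes P: "\<forall>p\<in>set ps. e3c_path r s t u v p \<and> length p - 1 \<le> s + 6"
    and D: "distinct ps" and I: "\<forall>p\<in>set ps. \<forall>q\<in>set ps. p \<noteq> q \<longrightarrow> set p \<inter> set q \<subseteq> {u,v}"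
    and L: "2*r+2 \<le> length ps"
  shows "\<exists>ps :: e3vertex list list. length ps = 2*r+2 \<and> distinct ps \<and>
     (\<forall>p\<in>set ps. e3c_path r s t u v p \<and> length p - 1 \<le> s + 6) \<and>
     (\<forall>i j. i < length ps \<and> j < length ps \<and> i \<noteq> j \<longrightarrow> set (ps!i) \<inter> set (ps!j) = {u,v})"
proof (intro exI conjI)
  let ?q = "take (2*r+2) ps"
  show "length ?q = 2*r+2" using L by simp
  show "distinct ?q" using D by simp
  have sub: "set ?q \<subseteq> set ps" by (rule set_take_subset)
  then show "\<forall>p\<in>set ?q. e3c_path r s t u v p \<and> length p - 1 \<le> s + 6" using P by blast
  have uv: "u \<in> set p \<and> v \<in> set p" if "p \<in> set ps" for p
    using P that unfolding e3c_path_def by (metis hd_in_set last_in_set)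
  show "\<forall>i j. i < length ?q \<and> j < length ?q \<and> i \<noteq> j \<longrightarrow> set (?q!i) \<inter> set (?q!j) = {u,v}"
  proof (intro allI impI)
    fix i j assume ij: "i < length ?q \<and> j < length ?q \<and> i \<noteq> j"
    have ne: "?q!i \<noteq> ?q!j" using ij D by (simp add: nth_eq_iff_index_eq)
    have "?q!i \<in> set ps" "?q!j \<in> set ps" using ij sub nth_mem by blast+
    then show "set (?q!i) \<inter> set (?q!j) = {u,v}" using I ne uv by blast
  qed
qed

lemma mod3_ne: assumes "x < (3::nat)" "e < 2" shows "(x + (e+1)) mod 3 \<noteq> x"
proof -
  have "x = 0 \<or> x = 1 \<or> x = 2" using assms by linarith
  moreover have "e = 0 \<or> e = 1" using assms by linarith
  ultimately show ?thesis by (elim disjE) simp_all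
qed

lemma mod3_inj: assumes "x < (3::nat)" "e < 2" "e' < 2" "(x + (e+1)) mod 3 = (x + (e'+1)) mod 3" shows "e = e'"
proof -
  have "x = 0 \<or> x = 1 \<or> x = 2" using assms by linarith
  moreover have "e = 0 \<or> e = 1" using assms by linarith
  moreover have "e' = 0 \<or> e' = 1" using assms by linarith
  ultimately show ?thesis using assms(4) by (elim disjE) simp_all
qed

definition nb :: "nat list \<Rightarrow> nat \<Rightarrow> nat list" where
  "nb X k = X[k div 2 := (X!(k div 2) + (k mod 2 + 1)) mod 3]"

lemma nb_props:
  assumes "ternary n X" "k < 2*n"
  shows "ternary n (nb X k)" "differ_one X (nb X k)" "differ_one (nb X k) X" "nb X k \<noteq> X"
proof -
  have l: "length X = n" using assms(1) by (simp add: ternary_def)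
  have kd: "k div 2 < n" using assms(2) by simp
  have x3: "X!(k div 2) < 3" using assms(1) kd unfolding ternary_def by (auto simp: l)
  have ne: "(X!(k div 2) + (k mod 2 + 1)) mod 3 \<noteq> X!(k div 2)" using x3
    using mod3_ne[OF x3, of "k mod 2"] by simp
  show "ternary n (nb X k)" unfolding nb_def by (rule ternary_update[OF assms(1)]) simp
  show d: "differ_one X (nb X k)" unfolding nb_def
    by (rule differ_one_upd_list) (use kd l ne in auto)
  show "differ_one (nb X k) X" by (rule differ_one_sym[OF d])
  show "nb X k \<noteq> X" using differ_one_neq[OF d] by simp
qed

lemma nb_inj:
  assumes "ternary n X" "k < 2*n" "k' < 2*n" "nb X k = nb X k'"
  shows "k = k'"
proof -
  have l: "length X = n" using assms(1) by (simp add: ternary_def)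
  have kd: "k div 2 < n" "k' div 2 < n" using assms(2,3) by simp_all
  have x3: "X!(k div 2) < 3" using assms(1) kd unfolding ternary_def by (auto simp: l)
  have e1: "nb X k ! (k div 2) = (X!(k div 2) + (k mod 2 + 1)) mod 3"
    using kd l by (simp add: nb_def)
  have e2: "nb X k' ! (k div 2) = (if k' div 2 = k div 2 then (X!(k div 2) + (k' mod 2 + 1)) mod 3 else X!(k div 2))"
    using kd l by (simp add: nb_def)
  have ne: "(X!(k div 2) + (k mod 2 + 1)) mod 3 \<noteq> X!(k div 2)" using x3
    using mod3_ne[OF x3, of "k mod 2"] by simp
  have same: "k' div 2 = k div 2" using e1 e2 ne assms(4) by (auto split: if_splits)
  then have "(X!(k div 2) + (k mod 2 + 1)) mod 3 = (X!(k div 2) + (k' mod 2 + 1)) mod 3"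
    using e1 e2 assms(4) by simp
  then have "k mod 2 = k' mod 2" using mod3_inj[OF x3, of "k mod 2" "k' mod 2"] by simp
  then show ?thesis using same by (metis div_mult_mod_eq)
qed



lemma walk_facts:
  assumes tB: "ternary s B" and tB': "ternary s B'"
  defines "W \<equiv> walk B B' (filter (\<lambda>j. B!j \<noteq> B'!j) [0..<s])"
  shows "W \<noteq> []" "hd W = B" "last W = B'" "distinct W" "bchain W" "\<forall>w\<in>set W. ternary s w"
    "length W \<le> Suc s" "\<forall>w\<in>set W. \<forall>j<s. w!j = B!j \<or> w!j = B'!j"
proof -
  interpret w: wsetup s B B' "filter (\<lambda>j. B!j \<noteq> B'!j) [0..<s]"
    by unfold_locales (use tB tB' in auto)
  show "W \<noteq> []" "hd W = B" "last W = B'" "distinct W" "bchain W" "\<forall>w\<in>set W. ternary s w"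
    "\<forall>w\<in>set W. \<forall>j<s. w!j = B!j \<or> w!j = B'!j"
    unfolding W_def using w.walk_ne w.walk_hd w.walk_last w.walk_distinct w.walk_chain w.walk_elem by auto
  show "length W \<le> Suc s" unfolding W_def using w.walk_length w.lenL by simp
qed

lemma lift_facts:
  assumes "W \<noteq> []" "bchain W" "\<forall>w\<in>set W. ternary s w" "ternary r a" "ternary t c"
  shows "ewalk r s t (map (\<lambda>b. (a,b,c,1)) W)" "distinct W \<Longrightarrow> distinct (map (\<lambda>b. (a,b,c,1::nat)) W)"
  using lift_ewalk[OF assms] by (auto simp: distinct_map inj_on_def)

lemma case0:
  assumes r1: "1 \<le> r" "r \<le> s" "s \<le> t" and tA: "ternary r A" and tB: "ternary s B"
    and tB': "ternary s B'" and tC: "ternary t C" and BB: "B \<noteq> B'"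
  shows "\<exists>ps :: e3vertex list list.
           length ps = 2*r + 2 \<and> distinct ps \<and>
           (\<forall>p\<in>set ps. e3c_path r s t (A,B,C,0) (A,B',C,0) p \<and> length p - 1 \<le> s + 6) \<and>
           (\<forall>i j. i < length ps \<and> j < length ps \<and> i \<noteq> j \<longrightarrow>
              set (ps ! i) \<inter> set (ps ! j) = {(A,B,C,0), (A,B',C,0)})"
proof -
  define W where "W = walk B B' (filter (\<lambda>j. B!j \<noteq> B'!j) [0..<s])"
  note wf = walk_facts[OF tB tB', folded W_def]
  have M: "ewalk r s t (map (\<lambda>b. (a,b,c,1)) W)" if "ternary r a" "ternary t c" for a c
    using lift_facts(1)[OF wf(1,5,6) that] .
  have MD: "distinct (map (\<lambda>b. (a,b,c,1::nat)) W)" for a c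
    using wf(4) by (simp add: distinct_map inj_on_def)
  define A1 where "A1 = nb A 0"
  have A1: "ternary r A1" "differ_one A A1" "differ_one A1 A" "A1 \<noteq> A"
    using nb_props[OF tA, of 0] r1 unfolding A1_def by auto
  have Cn: "ternary t (nb C k)" "differ_one C (nb C k)" "differ_one (nb C k) C" "nb C k \<noteq> C" if "k < 2*r" for k
    using nb_props[OF tC, of k] r1 that by auto
  define u where "u = (A,B,C,0::nat)"
  define v where "v = (A,B',C,0::nat)"
  define P0 where "P0 = u # map (\<lambda>b. (A,b,C,1)) W @ [v]"
  define P1 where "P1 = [u,(A,B,C,2),(A1,B,C,2)] @ map (\<lambda>b. (A1,b,C,1)) W @ [(A1,B',C,2),(A,B',C,2),v]"
  define Q where "Q = (\<lambda>k. [u,(A,B,nb C k,0)] @ map (\<lambda>b. (A,b,nb C k,1)) W @ [(A,B',nb C k,0),v])"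
  have vu: "u \<in> e3c_verts r s t" "v \<in> e3c_verts r s t" using tA tB tB' tC by (auto simp: u_def v_def)
  have hdW: "hd (map f W) = f B" "last (map f W) = f B'" for f using wf by (simp_all add: hd_map last_map)
  have p0: "e3c_path r s t u v P0"
    unfolding P0_def e3c_path_iff using M[OF tA tC] MD wf(1) vu tA tB tB' tC
    using BB by (simp add: ewalk_Cons ewalk_append hdW adj_iff u_def v_def image_iff)
  have p1: "e3c_path r s t u v P1"
    unfolding P1_def e3c_path_iff using M[OF A1(1) tC] MD wf(1) vu tA tB tB' tC A1
    using BB by (simp add: ewalk_Cons ewalk_append hdW adj_iff u_def v_def image_iff)
  have q: "e3c_path r s t u v (Q k)" if "k < 2*r" for k
    unfolding Q_def e3c_path_iff using M[OF tA Cn(1)[OF that]] MD wf(1) vu tA tB tB' tC Cn[OF that]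
    using BB by (simp add: ewalk_Cons ewalk_append hdW adj_iff u_def v_def image_iff)
  have lW: "length W \<le> Suc s" using wf(7) .
  have Cinj: "nb C k = nb C k' \<Longrightarrow> k < 2*r \<Longrightarrow> k' < 2*r \<Longrightarrow> k = k'" for k k'
    using nb_inj[OF tC, of k k'] r1 by auto
  let ?ps = "P0 # P1 # map Q [0..<2*r]"
  have "\<exists>ps :: e3vertex list list. length ps = 2*r+2 \<and> distinct ps \<and>
     (\<forall>p\<in>set ps. e3c_path r s t u v p \<and> length p - 1 \<le> s + 6) \<and>
     (\<forall>i j. i < length ps \<and> j < length ps \<and> i \<noteq> j \<longrightarrow> set (ps!i) \<inter> set (ps!j) = {u,v})"
  proof (rule family[of ?ps])
    show "\<forall>p\<in>set ?ps. e3c_path r s t u v p \<and> length p - 1 \<le> s + 6"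
      using p0 p1 q lW by (auto simp: P0_def P1_def Q_def)
    show "2*r+2 \<le> length ?ps" by simp
    have i1: "P0 ! 1 = (A,B,C,1)" "P1 ! 1 = (A,B,C,2)" "Q k ! 1 = (A,B,nb C k,0)" for k
      using wf(1,2) by (auto simp: P0_def P1_def Q_def hd_conv_nth nth_append nth_Cons' )
    have "inj_on Q {0..<2*r}"
      by (rule inj_onI) (use i1 Cinj in \<open>metis atLeastLessThan_iff prod.inject\<close>)
    then show "distinct ?ps" using i1
      by (auto simp: distinct_map)
    show "\<forall>p\<in>set ?ps. \<forall>q\<in>set ?ps. p \<noteq> q \<longrightarrow> set p \<inter> set q \<subseteq> {u,v}"
    proof -
      have c1: "k < 2*r \<Longrightarrow> (nb C k = C) = False" "k < 2*r \<Longrightarrow> (C = nb C k) = False" for k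
        using Cn(4) by (auto dest: sym)
      have c2: "k < 2*r \<Longrightarrow> k' < 2*r \<Longrightarrow> (nb C k = nb C k') = (k = k')" for k k'
        using Cinj by auto
      show ?thesis using A1(4) by (auto simp: P0_def P1_def Q_def u_def v_def c1 c2)
    qed
  qed
  then show ?thesis unfolding u_def v_def .
qed

lemma case2:
  assumes r1: "1 \<le> r" "r \<le> s" "s \<le> t" and tA: "ternary r A" and tB: "ternary s B"
    and tB': "ternary s B'" and tC: "ternary t C" and BB: "B \<noteq> B'"
  shows "\<exists>ps :: e3vertex list list.
           length ps = 2*r + 2 \<and> distinct ps \<and>
           (\<forall>p\<in>set ps. e3c_path r s t (A,B,C,2) (A,B',C,2) p \<and> length p - 1 \<le> s + 6) \<and>
           (\<forall>i j. i < length ps \<and> j < length ps \<and> i \<noteq> j \<longrightarrow>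
              set (ps ! i) \<inter> set (ps ! j) = {(A,B,C,2), (A,B',C,2)})"
proof -
  define W where "W = walk B B' (filter (\<lambda>j. B!j \<noteq> B'!j) [0..<s])"
  note wf = walk_facts[OF tB tB', folded W_def]
  have M: "ewalk r s t (map (\<lambda>b. (a,b,c,1)) W)" if "ternary r a" "ternary t c" for a c
    using lift_facts(1)[OF wf(1,5,6) that] .
  have MD: "distinct (map (\<lambda>b. (a,b,c,1::nat)) W)" for a c
    using wf(4) by (simp add: distinct_map inj_on_def)
  define A1 where "A1 = nb C 0"
  have A1: "ternary t A1" "differ_one C A1" "differ_one A1 C" "A1 \<noteq> C"
    using nb_props[OF tC, of 0] r1 unfolding A1_def by auto
  have Cn: "ternary r (nb A k)" "differ_one A (nb A k)" "differ_one (nb A k) A" "nb A k \<noteq> A" if "k < 2*r" for k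
    using nb_props[OF tA, of k] r1 that by auto
  define u where "u = (A,B,C,2::nat)"
  define v where "v = (A,B',C,2::nat)"
  define P0 where "P0 = u # map (\<lambda>b. (A,b,C,1)) W @ [v]"
  define P1 where "P1 = [u,(A,B,C,0),(A,B,A1,0)] @ map (\<lambda>b. (A,b,A1,1)) W @ [(A,B',A1,0),(A,B',C,0),v]"
  define Q where "Q = (\<lambda>k. [u,(nb A k,B,C,2)] @ map (\<lambda>b. (nb A k,b,C,1)) W @ [(nb A k,B',C,2),v])"
  have vu: "u \<in> e3c_verts r s t" "v \<in> e3c_verts r s t" using tA tB tB' tC by (auto simp: u_def v_def)
  have hdW: "hd (map f W) = f B" "last (map f W) = f B'" for f using wf by (simp_all add: hd_map last_map)
  have p0: "e3c_path r s t u v P0"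
    unfolding P0_def e3c_path_iff using M[OF tA tC] MD wf(1) vu tA tB tB' tC
    using BB by (simp add: ewalk_Cons ewalk_append hdW adj_iff u_def v_def image_iff)
  have p1: "e3c_path r s t u v P1"
    unfolding P1_def e3c_path_iff using M[OF tA A1(1)] MD wf(1) vu tA tB tB' tC A1
    using BB by (simp add: ewalk_Cons ewalk_append hdW adj_iff u_def v_def image_iff)
  have q: "e3c_path r s t u v (Q k)" if "k < 2*r" for k
    unfolding Q_def e3c_path_iff using M[OF Cn(1)[OF that] tC] MD wf(1) vu tA tB tB' tC Cn[OF that]
    using BB by (simp add: ewalk_Cons ewalk_append hdW adj_iff u_def v_def image_iff)
  have lW: "length W \<le> Suc s" using wf(7) .
  have Cinj: "nb A k = nb A k' \<Longrightarrow> k < 2*r \<Longrightarrow> k' < 2*r \<Longrightarrow> k = k'" for k k'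
    using nb_inj[OF tA, of k k'] r1 by auto
  let ?ps = "P0 # P1 # map Q [0..<2*r]"
  have "\<exists>ps :: e3vertex list list. length ps = 2*r+2 \<and> distinct ps \<and>
     (\<forall>p\<in>set ps. e3c_path r s t u v p \<and> length p - 1 \<le> s + 6) \<and>
     (\<forall>i j. i < length ps \<and> j < length ps \<and> i \<noteq> j \<longrightarrow> set (ps!i) \<inter> set (ps!j) = {u,v})"
  proof (rule family[of ?ps])
    show "\<forall>p\<in>set ?ps. e3c_path r s t u v p \<and> length p - 1 \<le> s + 6"
      using p0 p1 q lW by (auto simp: P0_def P1_def Q_def)
    show "2*r+2 \<le> length ?ps" by simp
    have i1: "P0 ! 1 = (A,B,C,1)" "P1 ! 1 = (A,B,C,0)" "Q k ! 1 = (nb A k,B,C,2)" for k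
      using wf(1,2) by (auto simp: P0_def P1_def Q_def hd_conv_nth nth_append nth_Cons' )
    have "inj_on Q {0..<2*r}"
      by (rule inj_onI) (use i1 Cinj in \<open>metis atLeastLessThan_iff prod.inject\<close>)
    then show "distinct ?ps" using i1
      by (auto simp: distinct_map)
    show "\<forall>p\<in>set ?ps. \<forall>q\<in>set ?ps. p \<noteq> q \<longrightarrow> set p \<inter> set q \<subseteq> {u,v}"
    proof -
      have c1: "k < 2*r \<Longrightarrow> (nb A k = A) = False" "k < 2*r \<Longrightarrow> (A = nb A k) = False" for k
        using Cn(4) by (auto dest: sym)
      have c2: "k < 2*r \<Longrightarrow> k' < 2*r \<Longrightarrow> (nb A k = nb A k') = (k = k')" for k k'
        using Cinj by auto
      show ?thesis using A1(4) by (auto simp: P0_def P1_def Q_def u_def v_def c1 c2)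
    qed
  qed
  then show ?thesis unfolding u_def v_def .
qed



lemma modc: assumes "a < (H::nat)" "b < H" "(k+a) mod H = (k+b) mod H" shows "a = b"
proof -
  have *: "a = b" if "a \<le> b" "b < H" "(k+a) mod H = (k+b) mod H" for a b
  proof -
    have "H dvd (k+b) - (k+a)" using that mod_eq_dvd_iff_nat[of "k+a" "k+b" H] by simp
    then have "H dvd b - a" by simp
    moreover have "b - a < H" using that by simp
    ultimately have "b - a = 0" using dvd_imp_le[of H "b-a"] by (cases "b - a = 0") auto
    then show ?thesis using that by simp
  qed
  show ?thesis using *[of a b] *[of b a] assms by (cases "a \<le> b") auto
qed
lemma modp: assumes "j < (H::nat)" "0 < j" shows "((k'+j) mod H + H - 1) mod H = (k' + (j - 1)) mod H"
proof -
  have "((k'+j) mod H + H - 1) mod H = ((k'+j) mod H + (H - 1)) mod H" using assms by simp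
  also have "\<dots> = (k'+j + (H-1)) mod H" by (simp add: mod_add_left_eq)
  also have "k'+j + (H-1) = (k'+(j-1)) + H" using assms by simp
  finally show ?thesis by simp
qed

lemma cyc_idx:
  fixes m m' H k k' :: nat
  assumes m: "0 < m" "m < H" and m': "m' < H" and k: "k < H" "k' < H"
    and eq: "(\<lambda>j. (k+j) mod H) ` {..<m} = (\<lambda>j. (k'+j) mod H) ` {..<m'}"
  shows "k = k'"
proof (rule ccontr)
  assume ne: "k \<noteq> k'"
  let ?S = "(\<lambda>j. (k+j) mod H) ` {..<m}"
  have k0: "(k+0) mod H = k" using k(1) by (simp only: add_0_right mod_less)
  have "(k+0) mod H \<in> ?S" using m(1) by blast
  then have "k \<in> ?S" by (simp only: k0)
  then have "k \<in> (\<lambda>j. (k'+j) mod H) ` {..<m'}" by (simp only: eq)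
  then obtain j where j: "j < m'" "k = (k'+j) mod H" by blast
  have j0: "j \<noteq> 0" using j(2) ne k(2) by (metis add_0_right mod_less)
  have jH: "j < H" using j(1) m' by linarith
  have "(k + H - 1) mod H = ((k'+j) mod H + H - 1) mod H" using j(2) by simp
  also have "\<dots> = (k' + (j - 1)) mod H" using modp[of j H k'] jH j0 by simp
  finally have e1: "(k + H - 1) mod H = (k' + (j - 1)) mod H" .
  have "j - 1 < m'" using j(1) by linarith
  then have "(k' + (j - 1)) mod H \<in> (\<lambda>j. (k'+j) mod H) ` {..<m'}" by blast
  then have "(k + H - 1) mod H \<in> ?S" by (simp only: e1 eq)
  then obtain i where i: "i < m" "(k + H - 1) mod H = (k+i) mod H" by blast
  have "k + H - 1 = k + (H - 1)" using m by linarith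
  then have i2: "(k+i) mod H = (k + (H-1)) mod H" using i(2) by simp
  have "i = H - 1" using modc[OF _ _ i2] i(1) m by linarith
  then show False using i(1) m by linarith
qed



locale inner =
  fixes s :: nat and B B' :: "nat list"
  assumes tB: "ternary s B" and tB': "ternary s B'" and BB: "B \<noteq> B'"
begin

definition L0 where "L0 = filter (\<lambda>j. B!j \<noteq> B'!j) [0..<s]"
definition H where "H = length L0"
definition cyc where "cyc k = map (\<lambda>j. L0!((k+j) mod H)) [0..<H]"
definition CY where "CY k = walk B B' (cyc k)"

lemma lens: "length B = s" "length B' = s" using tB tB' by (auto simp: ternary_def)

lemma L0_distinct: "distinct L0" by (simp add: L0_def)
lemma L0_set: "set L0 = {j. j<s \<and> B!j \<noteq> B'!j}" by (auto simp: L0_def)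

lemma H_pos: "0 < H"
proof -
  obtain j where "j < s" "B!j \<noteq> B'!j" using BB lens nth_equalityI by metis
  then have "j \<in> set L0" by (simp add: L0_set)
  then show ?thesis unfolding H_def by (cases L0) auto
qed

lemma cyc_len: "length (cyc k) = H" by (simp add: cyc_def)

lemma cyc_nth: "j < H \<Longrightarrow> cyc k ! j = L0!((k+j) mod H)" by (simp add: cyc_def)

lemma cyc_distinct: "distinct (cyc k)"
proof -
  have "inj_on (\<lambda>j. L0!((k+j) mod H)) {0..<H}"
  proof (rule inj_onI)
    fix a b assume ab: "a \<in> {0..<H}" "b \<in> {0..<H}" "L0!((k+a) mod H) = L0!((k+b) mod H)"
    have "(k+a) mod H < length L0" "(k+b) mod H < length L0" using H_pos by (auto simp: H_def)
    then have "(k+a) mod H = (k+b) mod H" using ab(3) L0_distinct by (simp add: nth_eq_iff_index_eq)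
    then show "a = b" using modc[of a H b k] ab by simp
  qed
  then show ?thesis unfolding cyc_def by (simp add: distinct_map)
qed

lemma cyc_set: "set (cyc k) = set L0"
proof -
  have sub: "set (cyc k) \<subseteq> set L0" using H_pos by (auto simp: cyc_def H_def)
  have "card (set (cyc k)) = H" using cyc_distinct by (simp add: distinct_card cyc_len)
  moreover have "card (set L0) = H" using L0_distinct by (simp add: distinct_card H_def)
  ultimately show ?thesis using sub by (simp add: card_subset_eq)
qed

lemma ws: "wsetup s B B' (cyc k)"
  by unfold_locales (use tB tB' cyc_distinct cyc_set L0_set in auto)

lemma take_cyc: "m \<le> H \<Longrightarrow> set (take m (cyc k)) = nth L0 ` ((\<lambda>j. (k+j) mod H) ` {..<m})"
  unfolding cyc_def by (auto simp: take_map image_image)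

lemma CY_facts:
  shows "CY k \<noteq> []" "hd (CY k) = B" "last (CY k) = B'" "distinct (CY k)" "bchain (CY k)"
    "\<forall>w\<in>set (CY k). ternary s w" "length (CY k) \<le> Suc s"
    "\<forall>w\<in>set (CY k). \<forall>j<s. w!j = B!j \<or> w!j = B'!j"
proof -
  interpret w: wsetup s B B' "cyc k" by (rule ws)
  show "CY k \<noteq> []" "hd (CY k) = B" "last (CY k) = B'" "distinct (CY k)" "bchain (CY k)"
    "\<forall>w\<in>set (CY k). ternary s w" "\<forall>w\<in>set (CY k). \<forall>j<s. w!j = B!j \<or> w!j = B'!j"
    unfolding CY_def using w.walk_ne w.walk_hd w.walk_last w.walk_distinct w.walk_chain w.walk_elem by auto
  show "length (CY k) \<le> Suc s" unfolding CY_def using w.walk_length w.lenL by simp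
qed

lemma CY_interior:
  assumes "w \<in> set (CY k)" "w \<noteq> B" "w \<noteq> B'"
  shows "\<exists>m. 0 < m \<and> m < H \<and> w = upd B B' (set (take m (cyc k)))"
proof -
  interpret w: wsetup s B B' "cyc k" by (rule ws)
  obtain m where m: "m \<le> H" "w = upd B B' (set (take m (cyc k)))"
    using assms(1) unfolding CY_def w.walk_set by (auto simp: cyc_len)
  have "m \<noteq> 0"
  proof
    assume "m = 0"
    then show False using m assms by simp
  qed
  moreover have "m \<noteq> H"
  proof
    assume "m = H"
    then have "w = last (CY k)" using m w.walk_nth[of H] w.walk_ne
      by (simp add: CY_def last_conv_nth w.walk_length cyc_len)
    then show False using CY_facts(3) assms(3) by simp
  qed
  ultimately show ?thesis using m by auto
qed

lemma CY_disj:
  assumes "k < H" "k' < H" "k \<noteq> k'"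
  shows "set (CY k) \<inter> set (CY k') \<subseteq> {B,B'}"
proof
  fix w assume w: "w \<in> set (CY k) \<inter> set (CY k')"
  show "w \<in> {B,B'}"
  proof (rule ccontr)
    assume "w \<notin> {B,B'}"
    then obtain m m' where m: "0 < m" "m < H" "w = upd B B' (set (take m (cyc k)))"
      and m': "0 < m'" "m' < H" "w = upd B B' (set (take m' (cyc k')))"
      using CY_interior w by blast
    interpret w1: wsetup s B B' "cyc k" by (rule ws)
    interpret w2: wsetup s B B' "cyc k'" by (rule ws)
    have "set (take m (cyc k)) = set (take m' (cyc k'))"
      using upd_inj[OF _ w1.take_sub w2.take_sub] m m' lens by (simp add: w1.lens)
    then have e: "nth L0 ` ((\<lambda>j. (k+j) mod H) ` {..<m}) = nth L0 ` ((\<lambda>j. (k'+j) mod H) ` {..<m'})"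
      using take_cyc m(2) m'(2) by simp
    have inj: "inj_on (nth L0) {..<H}" using L0_distinct by (simp add: inj_on_nth H_def)
    have s1: "(\<lambda>j. (k+j) mod H) ` {..<m} \<subseteq> {..<H}" "(\<lambda>j. (k'+j) mod H) ` {..<m'} \<subseteq> {..<H}"
      using H_pos by auto
    have "(\<lambda>j. (k+j) mod H) ` {..<m} = (\<lambda>j. (k'+j) mod H) ` {..<m'}"
      using inj_on_image_eq_iff[OF inj s1] e by simp
    then have "k = k'" using cyc_idx[of m H m' k k'] m m' assms by simp
    then show False using assms by simp
  qed
qed

lemma CY_1: assumes "k < H" shows "CY k ! 1 = upd B B' {L0 ! k}"
proof -
  interpret w: wsetup s B B' "cyc k" by (rule ws)
  have "CY k ! 1 = upd B B' (set (take 1 (cyc k)))"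
    unfolding CY_def using w.walk_nth[of 1] H_pos by (simp add: cyc_len)
  also have "take 1 (cyc k) = [L0 ! k]" using H_pos assms
    by (simp add: cyc_def take_map)
  finally show ?thesis by simp
qed

end



lemma sum_count: "sum_list (map (\<lambda>i. if P i then 2 else 1) xs) + length (filter (\<lambda>i. \<not> P i) xs) = 2 * length (xs::nat list)"
  by (induction xs) auto

lemma filter3: assumes "a < (3::nat)" "b < 3"
  shows "length (filter (\<lambda>c. c \<noteq> a \<and> c \<noteq> b) [0..<3]) = (if a = b then 2 else 1)"
proof -
  have "a = 0 \<or> a = 1 \<or> a = 2" "b = 0 \<or> b = 1 \<or> b = 2" using assms by linarith+
  then show ?thesis by (elim disjE) (simp_all add: upt_rec)
qed

lemma distinct_pairs: "distinct xs \<Longrightarrow> (\<forall>i. distinct (f i)) \<Longrightarrow> distinct (concat (map (\<lambda>i. map (Pair i) (f i)) xs))"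
  by (induction xs) (auto simp: distinct_map inj_on_def)

context inner begin

definition IC where
  "IC i c = B # walk (B[i:=c]) (B'[i:=c]) (filter (\<lambda>j. B[i:=c]!j \<noteq> B'[i:=c]!j) [0..<s]) @ [B']"

lemma IC_facts:
  assumes i: "i < s" and c: "c < 3" "c \<noteq> B!i" "c \<noteq> B'!i"
  shows "IC i c \<noteq> []" "hd (IC i c) = B" "last (IC i c) = B'" "distinct (IC i c)" "bchain (IC i c)"
    "\<forall>w\<in>set (IC i c). ternary s w" "length (IC i c) \<le> s + 3"
    "\<forall>w\<in>set (IC i c). w \<noteq> B \<longrightarrow> w \<noteq> B' \<longrightarrow> w!i = c \<and> (\<forall>j<s. j \<noteq> i \<longrightarrow> w!j = B!j \<or> w!j = B'!j)"
    "IC i c ! 1 = B[i:=c]"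
proof -
  let ?X = "B[i:=c]" and ?Y = "B'[i:=c]"
  define W where "W = walk ?X ?Y (filter (\<lambda>j. ?X!j \<noteq> ?Y!j) [0..<s])"
  have tX: "ternary s ?X" and tY: "ternary s ?Y" using ternary_update tB tB' c by auto
  note wf = walk_facts[OF tX tY, folded W_def]
  have IC: "IC i c = B # W @ [B']" by (simp add: IC_def W_def)
  have Xi: "?X ! i = c" "?Y ! i = c" using i lens by auto
  have elem: "w!i = c \<and> (\<forall>j<s. j \<noteq> i \<longrightarrow> w!j = B!j \<or> w!j = B'!j)" if "w \<in> set W" for w
  proof -
    have bt: "w!j = ?X!j \<or> w!j = ?Y!j" if "j < s" for j using wf(8) \<open>w \<in> set W\<close> that by blast
    have "w!i = c" using bt[OF i] Xi by auto
    moreover have "w!j = B!j \<or> w!j = B'!j" if "j < s" "j \<noteq> i" for j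
      using bt[OF that(1)] that(2) by simp
    ultimately show ?thesis by blast
  qed
  have nB: "B \<notin> set W" "B' \<notin> set W" using elem c by auto
  show "IC i c \<noteq> []" "hd (IC i c) = B" "last (IC i c) = B'" by (simp_all add: IC)
  show "distinct (IC i c)" using nB wf(4) BB by (simp add: IC)
  have d1: "differ_one B ?X" using differ_one_upd_list[of i B c] i c lens by simp
  have d2: "differ_one ?Y B'" using differ_one_sym[OF differ_one_upd_list[of i B' c]] i c lens by simp
  show "bchain (IC i c)" using wf(1,2,3,5) d1 d2
    by (simp add: IC bchain_Cons bchain_snoc hd_append)
  show "\<forall>w\<in>set (IC i c). ternary s w" using wf(6) tB tB' by (auto simp: IC)
  show "length (IC i c) \<le> s + 3" using wf(7) by (simp add: IC)
  show "\<forall>w\<in>set (IC i c). w \<noteq> B \<longrightarrow> w \<noteq> B' \<longrightarrow> w!i = c \<and> (\<forall>j<s. j \<noteq> i \<longrightarrow> w!j = B!j \<or> w!j = B'!j)"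
    using elem by (auto simp: IC)
  show "IC i c ! 1 = B[i:=c]" using wf(1,2) by (auto simp: IC nth_append hd_conv_nth)
qed

definition LI where
  "LI = concat (map (\<lambda>i. map (Pair i) (filter (\<lambda>c. c \<noteq> B!i \<and> c \<noteq> B'!i) [0..<3])) [0..<s])"

lemma LI_set: "set LI = {(i,c). i < s \<and> c < 3 \<and> c \<noteq> B!i \<and> c \<noteq> B'!i}"
  by (auto simp: LI_def)

lemma LI_distinct: "distinct LI"
  unfolding LI_def by (rule distinct_pairs) auto

lemma LI_length: "length LI + H = 2 * s"
proof -
  have "length LI = sum_list (map (\<lambda>i. if B!i = B'!i then 2 else 1) [0..<s])"
    unfolding LI_def length_concat map_map
  proof (rule arg_cong[where f=sum_list], rule map_cong[OF refl])
    fix i assume "i \<in> set [0..<s]"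
    then have "B!i < 3" "B'!i < 3" using tB tB' lens unfolding ternary_def by auto
    then show "(length \<circ> (\<lambda>i. map (Pair i) (filter (\<lambda>c. c \<noteq> B ! i \<and> c \<noteq> B' ! i) [0..<3]))) i =
          (if B ! i = B' ! i then 2 else 1)" using filter3 by simp
  qed
  moreover have "H = length (filter (\<lambda>i. \<not> B!i = B'!i) [0..<s])" by (simp add: H_def L0_def)
  ultimately show ?thesis using sum_count[of "\<lambda>i. B!i = B'!i" "[0..<s]"] by simp
qed

definition G where "G x = (case x of Inl ic \<Rightarrow> IC (fst ic) (snd ic) | Inr k \<Rightarrow> CY k)"
definition lab where "lab = map Inl LI @ map Inr [0..<H]"

lemma lab_length: "length lab = 2 * s" using LI_length by (simp add: lab_def)
lemma lab_distinct: "distinct lab" using LI_distinct by (auto simp: lab_def distinct_map)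

lemma G_facts: assumes "x \<in> set lab"
  shows "G x \<noteq> [] \<and> hd (G x) = B \<and> last (G x) = B' \<and> distinct (G x) \<and> bchain (G x) \<and>
     (\<forall>w\<in>set (G x). ternary s w) \<and> length (G x) \<le> s + 3"
proof (cases x)
  case (Inl ic)
  obtain i c where ic: "ic = (i,c)" by fastforce
  have "(i,c) \<in> set LI" using assms Inl ic by (auto simp: lab_def)
  then have cond: "i < s" "c < 3" "c \<noteq> B!i" "c \<noteq> B'!i" by (auto simp: LI_set)
  have G: "G x = IC i c" by (simp add: G_def Inl ic)
  show ?thesis unfolding G using IC_facts[OF cond] by blast
next
  case (Inr k)
  have G: "G x = CY k" by (simp add: G_def Inr)
  show ?thesis unfolding G using CY_facts[of k] by simp
qed

end



context inner begin

lemma lab_cases: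
  assumes "x \<in> set lab"
  shows "(\<exists>i c. x = Inl (i,c) \<and> i < s \<and> c < 3 \<and> c \<noteq> B!i \<and> c \<noteq> B'!i) \<or> (\<exists>k. x = Inr k \<and> k < H)"
  using assms by (auto simp: lab_def LI_set)

lemma IC_CY_disj:
  assumes "i < s" "c < 3" "c \<noteq> B!i" "c \<noteq> B'!i"
  shows "set (IC i c) \<inter> set (CY k) \<subseteq> {B,B'}"
proof
  fix w assume w: "w \<in> set (IC i c) \<inter> set (CY k)"
  show "w \<in> {B,B'}"
  proof (rule ccontr)
    assume n: "w \<notin> {B,B'}"
    then have "w!i = c" using IC_facts(8)[OF assms] w by blast
    moreover have "w!i = B!i \<or> w!i = B'!i" using CY_facts(8) w assms(1) by blast
    ultimately show False using assms by auto
  qed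
qed

lemma IC_IC_disj:
  assumes a: "i < s" "c < 3" "c \<noteq> B!i" "c \<noteq> B'!i"
    and b: "i' < s" "c' < 3" "c' \<noteq> B!i'" "c' \<noteq> B'!i'" and ne: "(i,c) \<noteq> (i',c')"
  shows "set (IC i c) \<inter> set (IC i' c') \<subseteq> {B,B'}"
proof
  fix w assume w: "w \<in> set (IC i c) \<inter> set (IC i' c')"
  show "w \<in> {B,B'}"
  proof (rule ccontr)
    assume n: "w \<notin> {B,B'}"
    have 1: "w!i = c \<and> (\<forall>j<s. j \<noteq> i \<longrightarrow> w!j = B!j \<or> w!j = B'!j)" using IC_facts(8)[OF a] w n by blast
    have 2: "w!i' = c' \<and> (\<forall>j<s. j \<noteq> i' \<longrightarrow> w!j = B!j \<or> w!j = B'!j)" using IC_facts(8)[OF b] w n by blast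
    show False
    proof (cases "i = i'")
      case True then show ?thesis using 1 2 ne by simp
    next
      case False then show ?thesis using 1 2 a by auto
    qed
  qed
qed

lemma G_disj:
  assumes "x \<in> set lab" "y \<in> set lab" "x \<noteq> y"
  shows "set (G x) \<inter> set (G y) \<subseteq> {B,B'}"
  using lab_cases[OF assms(1)] lab_cases[OF assms(2)]
proof (elim disjE exE conjE)
  fix i c i' c' assume "x = Inl (i,c)" "y = Inl (i',c')" "i < s" "c < 3" "c \<noteq> B!i" "c \<noteq> B'!i"
     "i' < s" "c' < 3" "c' \<noteq> B!i'" "c' \<noteq> B'!i'"
  then show ?thesis using IC_IC_disj[of i c i' c'] assms(3) by (simp add: G_def)
next
  fix i c k assume "x = Inl (i,c)" "y = Inr k" "i < s" "c < 3" "c \<noteq> B!i" "c \<noteq> B'!i"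
  then show ?thesis using IC_CY_disj[of i c k] by (simp add: G_def)
next
  fix i c k assume "y = Inl (i,c)" "x = Inr k" "i < s" "c < 3" "c \<noteq> B!i" "c \<noteq> B'!i"
  then show ?thesis using IC_CY_disj[of i c k] by (auto simp: G_def)
next
  fix k k' assume "x = Inr k" "y = Inr k'" "k < H" "k' < H"
  then show ?thesis using CY_disj[of k k'] assms(3) by (simp add: G_def)
qed

lemma G_inj:
  assumes "x \<in> set lab" "y \<in> set lab" "x \<noteq> y"
  shows "G x \<noteq> G y"
  using lab_cases[OF assms(1)] lab_cases[OF assms(2)]
proof (elim disjE exE conjE)
  fix i c i' c' assume h: "x = Inl (i,c)" "y = Inl (i',c')" "i < s" "c < 3" "c \<noteq> B!i" "c \<noteq> B'!i"
     "i' < s" "c' < 3" "c' \<noteq> B!i'" "c' \<noteq> B'!i'"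
  show ?thesis
  proof
    assume "G x = G y"
    then have "IC i c ! 1 = IC i' c' ! 1" using h by (simp add: G_def)
    then have e: "B[i:=c] = B[i':=c']" using IC_facts(9) h by simp
    have "B[i:=c] ! i = c" using h lens by simp
    then have "B[i':=c'] ! i = c" using e by simp
    then have "i = i'" using h lens by (cases "i = i'") auto
    then have "c = c'" using e h lens by (metis nth_list_update_eq)
    then show False using h assms(3) \<open>i = i'\<close> by simp
  qed
next
  fix i c k assume h: "x = Inl (i,c)" "y = Inr k" "i < s" "c < 3" "c \<noteq> B!i" "c \<noteq> B'!i" "k < H"
  show ?thesis
  proof
    assume "G x = G y"
    then have "IC i c ! 1 = CY k ! 1" using h by (simp add: G_def)
    then have "B[i:=c] ! i = upd B B' {L0 ! k} ! i" using IC_facts(9) h CY_1 by simp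
    then show False using h lens by (simp split: if_splits)
  qed
next
  fix i c k assume h: "y = Inl (i,c)" "x = Inr k" "i < s" "c < 3" "c \<noteq> B!i" "c \<noteq> B'!i" "k < H"
  show ?thesis
  proof
    assume "G x = G y"
    then have "IC i c ! 1 = CY k ! 1" using h by (simp add: G_def)
    then have "B[i:=c] ! i = upd B B' {L0 ! k} ! i" using IC_facts(9) h CY_1 by simp
    then show False using h lens by (simp split: if_splits)
  qed
next
  fix k k' assume h: "x = Inr k" "y = Inr k'" "k < H" "k' < H"
  show ?thesis
  proof
    assume "G x = G y"
    then have "CY k ! 1 = CY k' ! 1" using h by (simp add: G_def)
    then have e: "upd B B' {L0 ! k} = upd B B' {L0 ! k'}" using CY_1 h by simp
    have "L0!k \<in> set L0" "L0!k' \<in> set L0" using h by (auto simp: H_def)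
    then have "{L0 ! k} = {L0 ! k'}" using upd_inj[OF _ _ _ e] lens L0_set by auto
    then have "L0 ! k = L0 ! k'" by simp
    then have "k = k'" using L0_distinct h by (simp add: nth_eq_iff_index_eq H_def)
    then show False using h assms(3) by simp
  qed
qed

end



lemma case1:
  assumes r1: "1 \<le> r" "r \<le> s" "s \<le> t" and tA: "ternary r A" and tB: "ternary s B"
    and tB': "ternary s B'" and tC: "ternary t C" and BB: "B \<noteq> B'"
  shows "\<exists>ps :: e3vertex list list.
           length ps = 2*r + 2 \<and> distinct ps \<and>
           (\<forall>p\<in>set ps. e3c_path r s t (A,B,C,1) (A,B',C,1) p \<and> length p - 1 \<le> s + 6) \<and>
           (\<forall>i j. i < length ps \<and> j < length ps \<and> i \<noteq> j \<longrightarrow>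
              set (ps ! i) \<inter> set (ps ! j) = {(A,B,C,1), (A,B',C,1)})"
proof -
  interpret inner s B B' by unfold_locales (rule tB, rule tB', rule BB)
  define W where "W = walk B B' (filter (\<lambda>j. B!j \<noteq> B'!j) [0..<s])"
  note wf = walk_facts[OF tB tB', folded W_def]
  have M: "ewalk r s t (map (\<lambda>b. (a,b,c,1)) W)" if "ternary r a" "ternary t c" for a c
    using lift_facts(1)[OF wf(1,5,6) that] .
  have MD: "distinct (map (\<lambda>b. (a,b,c,1::nat)) W)" for a c
    using wf(4) by (simp add: distinct_map inj_on_def)
  define A1 where "A1 = nb A 0"
  have A1: "ternary r A1" "differ_one A A1" "differ_one A1 A" "A1 \<noteq> A"
    using nb_props[OF tA, of 0] r1 unfolding A1_def by auto
  define C1 where "C1 = nb C 0"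
  have C1: "ternary t C1" "differ_one C C1" "differ_one C1 C" "C1 \<noteq> C"
    using nb_props[OF tC, of 0] r1 unfolding C1_def by auto
  define u where "u = (A,B,C,1::nat)"
  define v where "v = (A,B',C,1::nat)"
  define P0 where "P0 = [u,(A,B,C,0),(A,B,C1,0)] @ map (\<lambda>b. (A,b,C1,1)) W @ [(A,B',C1,0),(A,B',C,0),v]"
  define P1 where "P1 = [u,(A,B,C,2),(A1,B,C,2)] @ map (\<lambda>b. (A1,b,C,1)) W @ [(A1,B',C,2),(A,B',C,2),v]"
  define lf where "lf = (\<lambda>x. map (\<lambda>b. (A,b,C,1::nat)) (G x))"
  have vu: "u \<in> e3c_verts r s t" "v \<in> e3c_verts r s t" using tA tB tB' tC by (auto simp: u_def v_def)
  have hdW: "hd (map f W) = f B" "last (map f W) = f B'" for f using wf by (simp_all add: hd_map last_map)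
  have p0: "e3c_path r s t u v P0"
    unfolding P0_def e3c_path_iff using M[OF tA C1(1)] MD wf(1) vu tA tB tB' tC C1 BB
    by (simp add: ewalk_Cons ewalk_append hdW adj_iff u_def v_def image_iff)
  have p1: "e3c_path r s t u v P1"
    unfolding P1_def e3c_path_iff using M[OF A1(1) tC] MD wf(1) vu tA tB tB' tC A1 BB
    by (simp add: ewalk_Cons ewalk_append hdW adj_iff u_def v_def image_iff)
  have q: "e3c_path r s t u v (lf x) \<and> length (lf x) - 1 \<le> s + 6" if x: "x \<in> set lab" for x
  proof -
    note g = G_facts[OF x]
    have "ewalk r s t (lf x)" unfolding lf_def using lift_facts(1)[of "G x" s r A t C] g tA tC by blast
    moreover have "distinct (lf x)" unfolding lf_def using g by (simp add: distinct_map inj_on_def)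
    moreover have "hd (lf x) = u" "last (lf x) = v" unfolding lf_def using g
      by (simp_all add: hd_map last_map u_def v_def)
    moreover have "length (lf x) - 1 \<le> s + 6" unfolding lf_def using g by (simp del: upt_Suc) linarith
    ultimately show ?thesis by (simp add: e3c_path_iff)
  qed
  have lW: "length W \<le> Suc s" using wf(7) .
  let ?ps = "P0 # P1 # map lf lab"
  have "\<exists>ps :: e3vertex list list. length ps = 2*r+2 \<and> distinct ps \<and>
     (\<forall>p\<in>set ps. e3c_path r s t u v p \<and> length p - 1 \<le> s + 6) \<and>
     (\<forall>i j. i < length ps \<and> j < length ps \<and> i \<noteq> j \<longrightarrow> set (ps!i) \<inter> set (ps!j) = {u,v})"
  proof (rule family[of ?ps])
    show "\<forall>p\<in>set ?ps. e3c_path r s t u v p \<and> length p - 1 \<le> s + 6"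
      using p0 p1 q lW by (auto simp: P0_def P1_def)
    show "2*r+2 \<le> length ?ps" using lab_length r1 by simp
    have lfs: "set (lf x) = (\<lambda>b. (A,b,C,1::nat)) ` set (G x)" for x by (simp add: lf_def)
    have n0: "(A,B,C,0) \<in> set P0" "(A,B,C,0) \<notin> set P1" "(A,B,C,2) \<in> set P1"
      "(A,B,C,0) \<notin> set (lf x)" "(A,B,C,2) \<notin> set (lf x)" for x
      by (auto simp: P0_def P1_def lfs u_def v_def)
    have "inj_on lf (set lab)"
    proof (rule inj_onI)
      fix x y assume xy: "x \<in> set lab" "y \<in> set lab" "lf x = lf y"
      then have "G x = G y" unfolding lf_def by (simp add: inj_map_eq_map inj_on_def)
      then show "x = y" using G_inj xy by blast
    qed
    then show "distinct ?ps" using n0 lab_distinct by (auto simp: distinct_map)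
    show "\<forall>p\<in>set ?ps. \<forall>q\<in>set ?ps. p \<noteq> q \<longrightarrow> set p \<inter> set q \<subseteq> {u,v}"
    proof -
      have a: "set P0 \<inter> set P1 \<subseteq> {u,v}" using A1(4) C1(4) by (auto simp: P0_def P1_def u_def v_def)
      have b: "set P0 \<inter> set (lf x) \<subseteq> {u,v}" "set P1 \<inter> set (lf x) \<subseteq> {u,v}" for x
        using A1(4) C1(4) by (auto simp: P0_def P1_def u_def v_def lfs)
      have c: "set (lf x) \<inter> set (lf y) \<subseteq> {u,v}" if "x \<in> set lab" "y \<in> set lab" "lf x \<noteq> lf y" for x y
      proof -
        have "x \<noteq> y" using that by blast
        then have "set (G x) \<inter> set (G y) \<subseteq> {B,B'}" using G_disj that by blast
        then show ?thesis by (auto simp: lfs u_def v_def)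
      qed
      have b2: "set (lf x) \<inter> set P0 \<subseteq> {u,v}" "set (lf x) \<inter> set P1 \<subseteq> {u,v}" "set P1 \<inter> set P0 \<subseteq> {u,v}" for x
        using a b[of x] by (auto simp: Int_commute)
      show ?thesis using a b b2 c by auto
    qed
  qed
  then show ?thesis unfolding u_def v_def .
qed

theorem lemma8:
  fixes r s t :: nat and A B B' C :: "nat list" and d :: nat
  assumes "1 \<le> r" "r \<le> s" "s \<le> t"
    and "(A,B,C,d) \<in> e3c_verts r s t" and "(A,B',C,d) \<in> e3c_verts r s t"
    and "B \<noteq> B'"
  shows "\<exists>ps :: e3vertex list list.
           length ps = 2*r + 2 \<and> distinct ps \<and>
           (\<forall>p\<in>set ps. e3c_path r s t (A,B,C,d) (A,B',C,d) p \<and> length p - 1 \<le> s + 6) \<and>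
           (\<forall>i j. i < length ps \<and> j < length ps \<and> i \<noteq> j \<longrightarrow>
              set (ps ! i) \<inter> set (ps ! j) = {(A,B,C,d), (A,B',C,d)})"
proof -
  have t: "ternary r A" "ternary s B" "ternary s B'" "ternary t C" "d < 3" using assms(4,5) by auto
  then have "d = 0 \<or> d = 1 \<or> d = 2" by linarith
  then show ?thesis
  proof (elim disjE)
    assume "d = 0" then show ?thesis using case0[OF assms(1,2,3) t(1-4) assms(6)] by simp
  next
    assume "d = 1" then show ?thesis using case1[OF assms(1,2,3) t(1-4) assms(6)] by simp
  next
    assume "d = 2" then show ?thesis using case2[OF assms(1,2,3) t(1-4) assms(6)] by simp
  qed
qed

end
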